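(* Let $X\subset A^+$ be a finite set which is the minimal generating set of the submonoid $X^*$. For every trim automaton $\mathcal{B}=(Q,i,i)$ recognizing $X^*$ with multiplicities, there is a sharp reduction from the flower automaton of $X$ onto $\mathcal{B}$.
   Context: Automata $(Q,i,t)$: finite state set, initial state $i$, terminal state $t$, edges $p\xrightarrow{a}q$ with $a\in A$ (a set of triples). The behaviour $|\mathcal{A}|$ assigns to $w\in A^*$ the number of paths from $i$ to $t$ labeled $w$; $\mathcal{A}$ recognizes $X^*$ with multiplicities if $|\mathcal{A}|=\underline{X}^*$, i.e. for every $w$ the number of such paths equals the number of factorizations of $w$ into words of $X$. An automaton is trim if every state lies on some path from the initial state to the terminal state. The flower automaton of $X$ has states $\{(u,v)\in A^+\times A^+\mid uv\in X\}\cup\{\omega\}$, $\omega=(1,1)$ initial and terminal, and edges $(u,av)\xrightarrow{a}(ua,v)$ for $uav\in X$, $u,v\ne1$; $\omega\xrightarrow{a}(a,v)$ for $av\in X$, $v\ne1$; $(u,a)\xrightarrow{a}\omega$ for $ua\in X$, $u\neq 1$; $\omega\xrightarrow{a}\omega$ for $a\in X$. A reduction from $(P,i,t)$ onto $(Q,j,u)$ is a surjective map $\rho:P\to Q$ with $\rho(i)=j,\rho(t)=u$ such that for all $q,q'\in Q$, $w\in A^*$, there is a path $q\xrightarrow{w}q'$ in the second automaton iff there is a path $p\xrightarrow{w}p'$ in the first with $\rho(p)=q,\rho(p')=q'$. It is sharp if $\rho^{-1}(j)=\{i\}$ and $\rho^{-1}(u)=\{t\}$. *)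

theory Defs
  imports Main
begin

definition lpath :: "('q \<times> 'a \<times> 'q) set \<Rightarrow> 'q list \<Rightarrow> 'a list \<Rightarrow> bool" where
  "lpath E qs w \<longleftrightarrow> length qs = Suc (length w) \<and>
     (\<forall>k < length w. (qs ! k, w ! k, qs ! Suc k) \<in> E)"

definition paths :: "('q \<times> 'a \<times> 'q) set \<Rightarrow> 'q \<Rightarrow> 'a list \<Rightarrow> 'q \<Rightarrow> 'q list set" where
  "paths E p w q = {qs. lpath E qs w \<and> hd qs = p \<and> last qs = q}"

definition has_path :: "('q \<times> 'a \<times> 'q) set \<Rightarrow> 'q \<Rightarrow> 'a list \<Rightarrow> 'q \<Rightarrow> bool" where
  "has_path E p w q \<longleftrightarrow> paths E p w q \<noteq> {}"

definition automaton :: "'q set \<Rightarrow> ('q \<times> 'a \<times> 'q) set \<Rightarrow> 'q \<Rightarrow> 'q \<Rightarrow> bool" where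
  "automaton Q E i t \<longleftrightarrow> finite Q \<and> i \<in> Q \<and> t \<in> Q \<and> E \<subseteq> Q \<times> UNIV \<times> Q"

definition behaviour :: "('q \<times> 'a \<times> 'q) set \<Rightarrow> 'q \<Rightarrow> 'q \<Rightarrow> 'a list \<Rightarrow> nat" where
  "behaviour E i t w = card (paths E i w t)"

definition factorizations :: "'a list set \<Rightarrow> 'a list \<Rightarrow> 'a list list set" where
  "factorizations X w = {xs. set xs \<subseteq> X \<and> concat xs = w}"

definition recognizes_star_mult ::
  "'q set \<Rightarrow> ('q \<times> 'a \<times> 'q) set \<Rightarrow> 'q \<Rightarrow> 'q \<Rightarrow> 'a list set \<Rightarrow> bool" where
  "recognizes_star_mult Q E i t X \<longleftrightarrow>
     (\<forall>w. behaviour E i t w = card (factorizations X w))"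

definition trim :: "'q set \<Rightarrow> ('q \<times> 'a \<times> 'q) set \<Rightarrow> 'q \<Rightarrow> 'q \<Rightarrow> bool" where
  "trim Q E i t \<longleftrightarrow> (\<forall>q\<in>Q. \<exists>u v. has_path E i u q \<and> has_path E q v t)"

definition star :: "'a list set \<Rightarrow> 'a list set" where
  "star X = {concat xs | xs. set xs \<subseteq> X}"

definition minimal_generating_set :: "'a list set \<Rightarrow> bool" where
  "minimal_generating_set X \<longleftrightarrow>
     (let M' = star X - {[]} in X = M' - {u @ v | u v. u \<in> M' \<and> v \<in> M'})"

definition flower_states :: "'a list set \<Rightarrow> ('a list \<times> 'a list) set" where
  "flower_states X = {(u, v). u \<noteq> [] \<and> v \<noteq> [] \<and> u @ v \<in> X} \<union> {([], [])}"

definition flower_edges ::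
  "'a list set \<Rightarrow> (('a list \<times> 'a list) \<times> 'a \<times> ('a list \<times> 'a list)) set" where
  "flower_edges X =
     {((u, a # v), a, (u @ [a], v)) | u a v. u @ a # v \<in> X \<and> u \<noteq> [] \<and> v \<noteq> []}
   \<union> {(([], []), a, ([a], v)) | a v. a # v \<in> X \<and> v \<noteq> []}
   \<union> {((u, [a]), a, ([], [])) | u a. u @ [a] \<in> X \<and> u \<noteq> []}
   \<union> {(([], []), a, ([], [])) | a. [a] \<in> X}"

definition reduction ::
  "('p \<Rightarrow> 'q) \<Rightarrow> 'p set \<Rightarrow> ('p \<times> 'a \<times> 'p) set \<Rightarrow> 'p \<Rightarrow> 'p \<Rightarrow>
   'q set \<Rightarrow> ('q \<times> 'a \<times> 'q) set \<Rightarrow> 'q \<Rightarrow> 'q \<Rightarrow> bool" where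
  "reduction \<rho> P E i t Q F j u \<longleftrightarrow>
     \<rho> ` P = Q \<and> \<rho> i = j \<and> \<rho> t = u \<and>
     (\<forall>q\<in>Q. \<forall>q'\<in>Q. \<forall>w. has_path F q w q' \<longleftrightarrow>
        (\<exists>p\<in>P. \<exists>p'\<in>P. has_path E p w p' \<and> \<rho> p = q \<and> \<rho> p' = q'))"

definition sharp_reduction ::
  "('p \<Rightarrow> 'q) \<Rightarrow> 'p set \<Rightarrow> ('p \<times> 'a \<times> 'p) set \<Rightarrow> 'p \<Rightarrow> 'p \<Rightarrow>
   'q set \<Rightarrow> ('q \<times> 'a \<times> 'q) set \<Rightarrow> 'q \<Rightarrow> 'q \<Rightarrow> bool" where
  "sharp_reduction \<rho> P E i t Q F j u \<longleftrightarrow>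
     reduction \<rho> P E i t Q F j u \<and>
     {p\<in>P. \<rho> p = j} = {i} \<and> {p\<in>P. \<rho> p = u} = {t}"

end

theory Submission
  imports Defs
begin

lemma nth_concat_tl:
  assumes "a \<noteq> []" "b \<noteq> []" "last a = hd b" "k \<ge> length a - 1"
  shows "(a @ tl b) ! k = b ! (k - (length a - 1))"
proof (cases "k = length a - 1")
  case True
  then show ?thesis using assms
    by (simp add: nth_append last_conv_nth hd_conv_nth)
next
  case False
  then have k: "k \<ge> length a" using assms by auto
  then have "(a @ tl b) ! k = tl b ! (k - length a)" by (simp add: nth_append)
  also have "\<dots> = b ! Suc (k - length a)" using assms(2) by (cases b) auto
  also have "Suc (k - length a) = k - (length a - 1)" using k assms(1) by (cases a) auto
  finally show ?thesis .
qed

lemma lpath_concat: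
  assumes "lpath E a u" "lpath E b v" "last a = hd b"
  shows "lpath E (a @ tl b) (u @ v)"
proof -
  have la: "length a = Suc (length u)" and lb: "length b = Suc (length v)"
    using assms unfolding lpath_def by auto
  have a0: "a \<noteq> []" "b \<noteq> []" using la lb by auto
  show ?thesis unfolding lpath_def
  proof (intro conjI allI impI)
    show "length (a @ tl b) = Suc (length (u @ v))" using la lb by simp
  next
    fix k assume k: "k < length (u @ v)"
    show "((a @ tl b) ! k, (u @ v) ! k, (a @ tl b) ! Suc k) \<in> E"
    proof (cases "k < length u")
      case True
      then show ?thesis using assms(1) la unfolding lpath_def by (simp add: nth_append)
    next
      case False
      have "(a @ tl b) ! k = b ! (k - length u)"
        using nth_concat_tl[OF a0 assms(3), of k] False la by simp
      moreover have "(a @ tl b) ! Suc k = b ! Suc (k - length u)"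
        using nth_concat_tl[OF a0 assms(3), of "Suc k"] False la by (simp add: Suc_diff_le)
      moreover have "(u @ v) ! k = v ! (k - length u)" using False by (simp add: nth_append)
      moreover have "k - length u < length v" using k False by simp
      ultimately show ?thesis using assms(2) unfolding lpath_def by simp
    qed
  qed
qed

lemma hd_concat_tl: "a \<noteq> [] \<Longrightarrow> hd (a @ tl b) = hd a" by simp

lemma last_concat_tl: "a \<noteq> [] \<Longrightarrow> b \<noteq> [] \<Longrightarrow> last a = hd b \<Longrightarrow> last (a @ tl b) = last b"
  by (cases b) auto

lemma lpath_sub:
  assumes "lpath E qs w" "j + m \<le> length w"
  shows "lpath E (take (Suc m) (drop j qs)) (take m (drop j w))"
proof -
  have l: "length qs = Suc (length w)" and e: "\<And>k. k < length w \<Longrightarrow> (qs ! k, w ! k, qs ! Suc k) \<in> E"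
    using assms(1) unfolding lpath_def by auto
  show ?thesis unfolding lpath_def
  proof (intro conjI allI impI)
    show "length (take (Suc m) (drop j qs)) = Suc (length (take m (drop j w)))"
      using l assms(2) by simp
  next
    fix k assume "k < length (take m (drop j w))"
    then have k: "k < m" "j + k < length w" using assms(2) by auto
    have "(qs ! (j + k), w ! (j + k), qs ! Suc (j + k)) \<in> E" using e k by simp
    then show "(take (Suc m) (drop j qs) ! k, take m (drop j w) ! k, take (Suc m) (drop j qs) ! Suc k) \<in> E"
      using k l by simp
  qed
qed

lemma lpath_map:
  assumes "lpath E qs w" "\<And>p a p'. (p, a, p') \<in> E \<Longrightarrow> (f p, a, f p') \<in> F"
  shows "lpath F (map f qs) w"
  using assms unfolding lpath_def by auto

lemma lpath_states:
  assumes "lpath E qs w" "E \<subseteq> S \<times> UNIV \<times> S" "hd qs \<in> S"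
  shows "set qs \<subseteq> S"
proof
  fix x assume "x \<in> set qs"
  then obtain k where k: "k < length qs" "qs ! k = x" by (auto simp: in_set_conv_nth)
  show "x \<in> S"
  proof (cases k)
    case 0 then show ?thesis using k assms(3) by (simp add: hd_conv_nth)
  next
    case (Suc j)
    then have "(qs ! j, w ! j, qs ! Suc j) \<in> E" using assms(1) k unfolding lpath_def by auto
    then show ?thesis using assms(2) k Suc by auto
  qed
qed

lemma finite_paths:
  assumes "finite Q" "E \<subseteq> Q \<times> UNIV \<times> Q" "p \<in> Q"
  shows "finite (paths E p w q)"
proof -
  have "paths E p w q \<subseteq> {qs. set qs \<subseteq> Q \<and> length qs = Suc (length w)}"
    using lpath_states[OF _ assms(2)] assms(3) unfolding paths_def lpath_def by auto
  moreover have "finite {qs. set qs \<subseteq> Q \<and> length qs = Suc (length w)}"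
    using finite_lists_length_eq[OF assms(1)] by simp
  ultimately show ?thesis using finite_subset by blast
qed

lemma length_concat_ge: "set xs \<subseteq> X \<Longrightarrow> [] \<notin> X \<Longrightarrow> length xs \<le> length (concat xs)"
proof (induction xs)
  case (Cons x xs)
  then have "x \<noteq> []" by auto
  then show ?case using Cons by (cases x) auto
qed simp

lemma finite_fact:
  assumes "finite X" "[] \<notin> X"
  shows "finite (factorizations X w)"
proof -
  have "factorizations X w \<subseteq> {xs. set xs \<subseteq> X \<and> length xs \<le> length w}"
    using length_concat_ge[OF _ assms(2)] unfolding factorizations_def by auto
  moreover have "finite {xs. set xs \<subseteq> X \<and> length xs \<le> length w}"
    using finite_lists_length_le[OF assms(1)] by simp
  ultimately show ?thesis using finite_subset by blast
qed

lemma fact_nil: "[] \<notin> X \<Longrightarrow> factorizations X [] = {[]}"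
  unfolding factorizations_def apply auto
  by (metis list.set_sel(1) subsetD neq_Nil_conv)

lemma paths_nil: "paths E p [] p = {[p]}"
  unfolding paths_def lpath_def by (auto simp: length_Suc_conv)



locale setting =
  fixes X :: "'a list set" and Q :: "'q set" and E :: "('q \<times> 'a \<times> 'q) set" and i :: 'q
  assumes finX: "finite X" and nilX: "[] \<notin> X" and finQ: "finite Q" and iQ: "i \<in> Q"
    and EQ: "E \<subseteq> Q \<times> UNIV \<times> Q"
    and tr: "trim Q E i i" and rec: "\<And>w. card (paths E i w i) = card (factorizations X w)"
begin

definition frps where
  "frps w = {qs \<in> paths E i w i. \<forall>k. 0 < k \<longrightarrow> k < length w \<longrightarrow> qs ! k \<noteq> i}"

lemma paths_facts:
  assumes "qs \<in> paths E p w q"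
  shows "lpath E qs w" "length qs = Suc (length w)" "hd qs = p" "last qs = q"
    "qs ! 0 = p" "qs ! length w = q" "qs \<noteq> []"
proof -
  show 1: "lpath E qs w" "hd qs = p" "last qs = q" using assms unfolding paths_def by auto
  show 2: "length qs = Suc (length w)" using 1 unfolding lpath_def by auto
  show 3: "qs \<noteq> []" using 2 by auto
  show "qs ! 0 = p" using 1 3 by (simp add: hd_conv_nth)
  show "qs ! length w = q" using 1 2 3 by (simp add: last_conv_nth)
qed

lemma finite_frps: "finite (frps w)"
proof -
  have "frps w \<subseteq> paths E i w i" unfolding frps_def by auto
  then show ?thesis using finite_paths[OF finQ EQ iQ] finite_subset by blast
qed

lemma split_first:
  assumes qs: "qs \<in> paths E i w i" and w: "w \<noteq> []"
  shows "\<exists>k. 1 \<le> k \<and> k \<le> length w \<and> take (Suc k) qs \<in> frps (take k w)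
           \<and> drop k qs \<in> paths E i (drop k w) i"
proof -
  define n where "n = length w"
  note f = paths_facts[OF qs]
  have n0: "0 < n" using w n_def by auto
  have Pn: "0 < n \<and> qs ! n = i" using f n0 n_def by simp
  define k where "k = (LEAST k. 0 < k \<and> qs ! k = i)"
  have Pk: "0 < k \<and> qs ! k = i" unfolding k_def by (rule LeastI[of _ n], rule Pn)
  have kn: "k \<le> n" unfolding k_def by (rule Least_le, rule Pn)
  have nk: "\<And>j. 0 < j \<Longrightarrow> j < k \<Longrightarrow> qs ! j \<noteq> i"
    using not_less_Least unfolding k_def by blast
  have lt: "length qs = Suc n" using f n_def by simp
  have "lpath E (take (Suc k) (drop 0 qs)) (take k (drop 0 w))"
    by (rule lpath_sub[OF f(1)]) (use kn n_def in simp)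
  then have l1: "lpath E (take (Suc k) qs) (take k w)" by simp
  have lst: "last (take (Suc k) qs) = qs ! k"
    using kn lt by (simp add: take_Suc_conv_app_nth)
  have hdt: "hd (take (Suc k) qs) = i" using f(3) lt by simp
  have "take (Suc k) qs \<in> frps (take k w)"
    unfolding frps_def paths_def
    using l1 Pk nk kn lt lst hdt by (auto simp: min_def)
  moreover
  have "lpath E (take (Suc (n - k)) (drop k qs)) (take (n - k) (drop k w))"
    by (rule lpath_sub[OF f(1)]) (use kn n_def in simp)
  then have l2: "lpath E (drop k qs) (drop k w)" using lt kn n_def by simp
  have "drop k qs \<in> paths E i (drop k w) i"
    unfolding paths_def using l2 Pk kn lt f(4) by (auto simp: hd_drop_conv_nth)
  ultimately show ?thesis using Pk kn n_def by (intro exI[of _ k]) auto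
qed

lemma frps_facts:
  assumes "qs \<in> frps w"
  shows "qs \<in> paths E i w i" "\<And>k. 0 < k \<Longrightarrow> k < length w \<Longrightarrow> qs ! k \<noteq> i"
  using assms unfolding frps_def by auto

lemma paths_decomp:
  assumes w: "w \<noteq> []"
  shows "paths E i w i = (\<Union>k\<in>{1..length w}. (\<lambda>(a, b). a @ tl b) ` (frps (take k w) \<times> paths E i (drop k w) i))"
    (is "_ = ?R")
proof
  show "paths E i w i \<subseteq> ?R"
  proof
    fix qs assume qs: "qs \<in> paths E i w i"
    from split_first[OF qs w] obtain k where k: "1 \<le> k" "k \<le> length w"
      "take (Suc k) qs \<in> frps (take k w)" "drop k qs \<in> paths E i (drop k w) i" by blast
    have "qs = take (Suc k) qs @ tl (drop k qs)" by (metis append_take_drop_id drop_Suc tl_drop)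
    then show "qs \<in> ?R" using k by force
  qed
next
  show "?R \<subseteq> paths E i w i"
  proof clarify
    fix k a b assume k: "k \<in> {1..length w}" and a: "a \<in> frps (take k w)" and b: "b \<in> paths E i (drop k w) i"
    note fa = paths_facts[OF frps_facts(1)[OF a]] and fb = paths_facts[OF b]
    have "lpath E (a @ tl b) (take k w @ drop k w)"
      by (rule lpath_concat[OF fa(1) fb(1)]) (simp add: fa fb)
    then show "a @ tl b \<in> paths E i w i"
      unfolding paths_def using fa fb last_concat_tl[of a b] by simp
  qed
qed

lemma card_paths_sum:
  assumes w: "w \<noteq> []"
  shows "card (paths E i w i) = (\<Sum>k\<in>{1..length w}. card (frps (take k w)) * card (paths E i (drop k w) i))"
proof -
  let ?f = "\<lambda>(a::'q list, b::'q list). a @ tl b"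
  let ?A = "\<lambda>k. frps (take k w) \<times> paths E i (drop k w) i"
  have inj: "inj_on ?f (?A k)" if k: "k \<in> {1..length w}" for k
  proof (rule inj_onI, clarify)
    fix a b a' b' assume a: "a \<in> frps (take k w)" and b: "b \<in> paths E i (drop k w) i"
      and a': "a' \<in> frps (take k w)" and b': "b' \<in> paths E i (drop k w) i"
      and eq: "a @ tl b = a' @ tl b'"
    note fa = paths_facts[OF frps_facts(1)[OF a]] and fb = paths_facts[OF b]
    note fa' = paths_facts[OF frps_facts(1)[OF a']] and fb' = paths_facts[OF b']
    have "length a = length a'" using fa fa' by simp
    then have "a = a'" "tl b = tl b'" using eq by auto
    moreover have "b = b'" using \<open>tl b = tl b'\<close> fb fb'
      by (metis list.collapse)
    ultimately show "a = a' \<and> b = b'" by simp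
  qed
  have disj: "?f ` ?A k \<inter> ?f ` ?A k' = {}" if k: "k \<in> {1..length w}" "k' \<in> {1..length w}" "k \<noteq> k'" for k k'
  proof -
    have *: False if "k1 < k2" "k1 \<in> {1..length w}" "k2 \<in> {1..length w}"
      "a \<in> frps (take k1 w)" "b \<in> paths E i (drop k1 w) i"
      "a' \<in> frps (take k2 w)" "b' \<in> paths E i (drop k2 w) i" "a @ tl b = a' @ tl b'" for k1 k2 a b a' b'
    proof -
      note fa = paths_facts[OF frps_facts(1)[OF that(4)]]
      note fa' = paths_facts[OF frps_facts(1)[OF that(6)]]
      have la: "length a = Suc k1" using fa that by simp
      have la': "length a' = Suc k2" using fa' that by simp
      have "(a @ tl b) ! k1 = a ! k1" using la by (simp add: nth_append)
      also have "\<dots> = i" using fa(6) that(1-3) by (simp add: min_def)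
      finally have "(a @ tl b) ! k1 = i" .
      moreover have "(a' @ tl b') ! k1 = a' ! k1" using la' that by (simp add: nth_append)
      moreover have "a' ! k1 \<noteq> i" using frps_facts(2)[OF that(6), of k1] that by simp
      ultimately show False using that by simp
    qed
    show ?thesis
    proof (rule ccontr)
      assume "?f ` ?A k \<inter> ?f ` ?A k' \<noteq> {}"
      then obtain a b a' b' where "(a, b) \<in> ?A k" "(a', b') \<in> ?A k'" "a @ tl b = a' @ tl b'" by auto
      then show False using *[of k k' a b a' b'] *[of k' k a' b' a b] k by (cases "k < k'") auto
    qed
  qed
  have fin: "finite (?A k)" for k
    using finite_frps finite_paths[OF finQ EQ iQ] by auto
  have "card (paths E i w i) = card (\<Union>k\<in>{1..length w}. ?f ` ?A k)"
    using paths_decomp[OF w] by simp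
  also have "\<dots> = (\<Sum>k\<in>{1..length w}. card (?f ` ?A k))"
    by (rule card_UN_disjoint) (use fin disj in auto)
  also have "\<dots> = (\<Sum>k\<in>{1..length w}. card (?A k))"
    by (rule sum.cong[OF refl], rule card_image, rule inj)
  also have "\<dots> = (\<Sum>k\<in>{1..length w}. card (frps (take k w)) * card (paths E i (drop k w) i))"
    by (simp add: card_cartesian_product)
  finally show ?thesis .
qed

lemma card_fact_sum:
  assumes w: "w \<noteq> []"
  shows "card (factorizations X w) =
    (\<Sum>k\<in>{1..length w}. (if take k w \<in> X then 1 else 0) * card (factorizations X (drop k w)))"
proof -
  let ?K = "{k \<in> {1..length w}. take k w \<in> X}"
  let ?B = "\<lambda>k. (Cons (take k w)) ` factorizations X (drop k w)"
  have dec: "factorizations X w = (\<Union>k\<in>?K. ?B k)"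
  proof
    show "factorizations X w \<subseteq> (\<Union>k\<in>?K. ?B k)"
    proof
      fix xs assume xs: "xs \<in> factorizations X w"
      then have s: "set xs \<subseteq> X" "concat xs = w" unfolding factorizations_def by auto
      then obtain x ys where xs_eq: "xs = x # ys" using w by (cases xs) auto
      have x: "x \<in> X" "x \<noteq> []" using s xs_eq nilX by auto
      have w_eq: "w = x @ concat ys" using s xs_eq by simp
      let ?k = "length x"
      have "?k \<in> ?K" using x w_eq by (auto simp: Suc_le_eq)
      moreover have "ys \<in> factorizations X (drop ?k w)"
        using s xs_eq w_eq unfolding factorizations_def by auto
      moreover have "take ?k w = x" using w_eq by simp
      ultimately show "xs \<in> (\<Union>k\<in>?K. ?B k)" using xs_eq by force
    qed
  next
    show "(\<Union>k\<in>?K. ?B k) \<subseteq> factorizations X w"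
      unfolding factorizations_def by auto
  qed
  have disj: "?B k \<inter> ?B k' = {}" if "k \<in> ?K" "k' \<in> ?K" "k \<noteq> k'" for k k'
  proof -
    have "length (take k w) = k" "length (take k' w) = k'" using that by auto
    then have "take k w \<noteq> take k' w" using that(3) by metis
    then show ?thesis by auto
  qed
  have "card (factorizations X w) = (\<Sum>k\<in>?K. card (?B k))"
    unfolding dec by (rule card_UN_disjoint) (use disj finite_fact[OF finX nilX] in auto)
  also have "\<dots> = (\<Sum>k\<in>?K. card (factorizations X (drop k w)))"
    by (rule sum.cong) (auto intro: card_image)
  also have "\<dots> = (\<Sum>k\<in>{1..length w}. if take k w \<in> X then card (factorizations X (drop k w)) else 0)"
    by (rule sum.inter_filter) simp
  also have "\<dots> = (\<Sum>k\<in>{1..length w}. (if take k w \<in> X then 1 else 0) * card (factorizations X (drop k w)))"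
    by (rule sum.cong) auto
  finally show ?thesis .
qed

lemma card_frps: "w \<noteq> [] \<Longrightarrow> card (frps w) = (if w \<in> X then 1 else 0)"
proof (induction "length w" arbitrary: w rule: less_induct)
  case less
  obtain m where m: "length w = Suc m" using less.prems by (cases w) auto
  let ?P = "\<lambda>v. card (paths E i v i)"
  let ?F = "\<lambda>v. card (factorizations X v)"
  have IH: "card (frps (take k w)) = (if take k w \<in> X then 1 else 0)" if "k \<in> {1..m}" for k
    using that m by (intro less.hyps) auto
  have "(\<Sum>k\<in>{1..m}. card (frps (take k w)) * ?P (drop k w)) + card (frps w) * ?P []
      = (\<Sum>k\<in>{1..Suc m}. card (frps (take k w)) * ?P (drop k w))"
    using m by simp
  also have "\<dots> = ?P w" using card_paths_sum[OF less.prems] m by simp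
  also have "\<dots> = ?F w" by (rule rec)
  also have "\<dots> = (\<Sum>k\<in>{1..Suc m}. (if take k w \<in> X then 1 else 0) * ?F (drop k w))"
    using card_fact_sum[OF less.prems] m by simp
  also have "\<dots> = (\<Sum>k\<in>{1..m}. (if take k w \<in> X then 1 else 0) * ?F (drop k w)) + (if w \<in> X then 1 else 0) * ?F []"
    using m by simp
  also have "(\<Sum>k\<in>{1..m}. (if take k w \<in> X then 1 else 0) * ?F (drop k w))
           = (\<Sum>k\<in>{1..m}. card (frps (take k w)) * ?P (drop k w))"
    by (rule sum.cong) (simp_all add: IH rec)
  finally have "card (frps w) * ?P [] = (if w \<in> X then 1 else 0) * ?F []" by simp
  then show ?case by (simp add: fact_nil[OF nilX] paths_nil)
qed

lemma frps_X: "qs \<in> frps w \<Longrightarrow> w \<noteq> [] \<Longrightarrow> w \<in> X"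
  using card_frps[of w] finite_frps[of w] by (cases "w \<in> X") auto

lemma frps_ex1: "x \<in> X \<Longrightarrow> \<exists>!qs. qs \<in> frps x"
proof -
  assume x: "x \<in> X"
  then have "x \<noteq> []" using nilX by auto
  then have "card (frps x) = 1" using card_frps x by simp
  then obtain q where "frps x = {q}" using card_1_singletonE by blast
  then show ?thesis by auto
qed

definition fpath where "fpath x = (THE qs. qs \<in> frps x)"

lemma fpath: "x \<in> X \<Longrightarrow> fpath x \<in> frps x"
  unfolding fpath_def using frps_ex1 by (rule theI')

lemma fpath_unique: "x \<in> X \<Longrightarrow> qs \<in> frps x \<Longrightarrow> qs = fpath x"
  using fpath frps_ex1 by blast

end


lemma FE1: "u @ a # v \<in> X \<Longrightarrow> u \<noteq> [] \<Longrightarrow> v \<noteq> [] \<Longrightarrow> ((u, a # v), a, (u @ [a], v)) \<in> flower_edges X"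
  unfolding flower_edges_def by (intro UnI1) blast
lemma FE2: "a # v \<in> X \<Longrightarrow> v \<noteq> [] \<Longrightarrow> (([], []), a, ([a], v)) \<in> flower_edges X"
  unfolding flower_edges_def by (rule UnI1, rule UnI1, rule UnI2) blast
lemma FE3: "u @ [a] \<in> X \<Longrightarrow> u \<noteq> [] \<Longrightarrow> ((u, [a]), a, ([], [])) \<in> flower_edges X"
  unfolding flower_edges_def by (rule UnI1, rule UnI2) blast
lemma FE4: "[a] \<in> X \<Longrightarrow> (([], []), a, ([], [])) \<in> flower_edges X"
  unfolding flower_edges_def by (rule UnI2) blast
lemma FE_sub0: "flower_edges X \<subseteq> flower_states X \<times> UNIV \<times> flower_states X"
proof
  fix e assume "e \<in> flower_edges X"
  then show "e \<in> flower_states X \<times> UNIV \<times> flower_states X"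
    unfolding flower_edges_def
  proof (elim UnE CollectE exE conjE)
    fix u a v assume "e = ((u, a # v), a, u @ [a], v)" "u @ a # v \<in> X" "u \<noteq> []" "v \<noteq> []"
    then show ?thesis unfolding flower_states_def by simp
  next
    fix a v assume "e = (([], []), a, [a], v)" "a # v \<in> X" "v \<noteq> []"
    then show ?thesis unfolding flower_states_def by simp
  next
    fix u a assume "e = ((u, [a]), a, [], [])" "u @ [a] \<in> X" "u \<noteq> []"
    then show ?thesis unfolding flower_states_def by simp
  next
    fix a assume "e = (([], []), a, [], [])" "[a] \<in> X"
    then show ?thesis unfolding flower_states_def by simp
  qed
qed

context setting begin

abbreviation "FS \<equiv> flower_states X"
abbreviation "FE \<equiv> flower_edges X"

definition rho :: "'a list \<times> 'a list \<Rightarrow> 'q" where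
  "rho p = (if p = ([], []) then i else fpath (fst p @ snd p) ! length (fst p))"

lemma FE_sub: "FE \<subseteq> FS \<times> UNIV \<times> FS"
  by (rule FE_sub0)

lemma fpath_facts:
  assumes x: "x \<in> X"
  shows "length (fpath x) = Suc (length x)" "fpath x ! 0 = i" "fpath x ! length x = i"
    "\<And>k. 0 < k \<Longrightarrow> k < length x \<Longrightarrow> fpath x ! k \<noteq> i"
    "\<And>k. k < length x \<Longrightarrow> (fpath x ! k, x ! k, fpath x ! Suc k) \<in> E"
    "set (fpath x) \<subseteq> Q"
proof -
  note fr = fpath[OF x]
  note pf = paths_facts[OF frps_facts(1)[OF fr]]
  show "length (fpath x) = Suc (length x)" "fpath x ! 0 = i" "fpath x ! length x = i" using pf by auto
  show "\<And>k. 0 < k \<Longrightarrow> k < length x \<Longrightarrow> fpath x ! k \<noteq> i" using frps_facts(2)[OF fr] by auto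
  show "\<And>k. k < length x \<Longrightarrow> (fpath x ! k, x ! k, fpath x ! Suc k) \<in> E"
    using pf(1) unfolding lpath_def by auto
  show "set (fpath x) \<subseteq> Q" using lpath_states[OF pf(1) EQ] pf iQ by simp
qed

lemma rho_edge:
  assumes "(p, a, p') \<in> FE"
  shows "(rho p, a, rho p') \<in> E"
  using assms unfolding flower_edges_def
proof (elim UnE CollectE exE conjE)
  fix u b v assume e: "(p, a, p') = ((u, b # v), b, u @ [b], v)" and x: "u @ b # v \<in> X" "u \<noteq> []" "v \<noteq> []"
  have "(fpath (u @ b # v) ! length u, (u @ b # v) ! length u, fpath (u @ b # v) ! Suc (length u)) \<in> E"
    using fpath_facts(5)[OF x(1), of "length u"] by simp
  then show ?thesis using e x by (simp add: rho_def)
next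
  fix b v assume e: "(p, a, p') = (([], []), b, [b], v)" and x: "b # v \<in> X" "v \<noteq> []"
  have "(fpath (b # v) ! 0, (b # v) ! 0, fpath (b # v) ! Suc 0) \<in> E"
    using fpath_facts(5)[OF x(1), of 0] by simp
  then show ?thesis using e x fpath_facts(2)[OF x(1)] by (simp add: rho_def)
next
  fix u b assume e: "(p, a, p') = ((u, [b]), b, [], [])" and x: "u @ [b] \<in> X" "u \<noteq> []"
  have "(fpath (u @ [b]) ! length u, (u @ [b]) ! length u, fpath (u @ [b]) ! Suc (length u)) \<in> E"
    using fpath_facts(5)[OF x(1), of "length u"] by simp
  then show ?thesis using e x fpath_facts(3)[OF x(1)] by (simp add: rho_def)
next
  fix b assume e: "(p, a, p') = (([], []), b, [], [])" and x: "[b] \<in> X"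
  have "(fpath [b] ! 0, [b] ! 0, fpath [b] ! Suc 0) \<in> E"
    using fpath_facts(5)[OF x(1), of 0] by simp
  then show ?thesis using e x fpath_facts(2,3)[OF x(1)] by (simp add: rho_def)
qed

lemma rho_Q: "p \<in> FS \<Longrightarrow> rho p \<in> Q"
proof -
  assume p: "p \<in> FS"
  show ?thesis
  proof (cases "p = ([], [])")
    case True then show ?thesis by (simp add: rho_def iQ)
  next
    case False
    then obtain u v where uv: "p = (u, v)" "u \<noteq> []" "v \<noteq> []" "u @ v \<in> X"
      using p unfolding flower_states_def by auto
    have "fpath (u @ v) ! length u \<in> set (fpath (u @ v))"
      using fpath_facts(1)[OF uv(4)] by simp
    then show ?thesis using fpath_facts(6)[OF uv(4)] uv by (auto simp: rho_def)
  qed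
qed

lemma rho_i: "p \<in> FS \<Longrightarrow> rho p = i \<Longrightarrow> p = ([], [])"
proof (rule ccontr)
  assume p: "p \<in> FS" "rho p = i" "p \<noteq> ([], [])"
  then obtain u v where uv: "p = (u, v)" "u \<noteq> []" "v \<noteq> []" "u @ v \<in> X"
    unfolding flower_states_def by auto
  have "fpath (u @ v) ! length u \<noteq> i"
    using fpath_facts(4)[OF uv(4), of "length u"] uv by simp
  then show False using p uv by (simp add: rho_def)
qed

definition fp :: "'a list \<Rightarrow> ('a list \<times> 'a list) list" where
  "fp x = map (\<lambda>j. if j = 0 \<or> j = length x then ([], []) else (take j x, drop j x)) [0..<Suc (length x)]"

lemma fp_len: "length (fp x) = Suc (length x)"
  unfolding fp_def by simp

lemma fp_nth: "j \<le> length x \<Longrightarrow> fp x ! j = (if j = 0 \<or> j = length x then ([], []) else (take j x, drop j x))"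
  unfolding fp_def by (simp del: upt_Suc add: nth_append)

lemma fp_lpath:
  assumes x: "x \<in> X"
  shows "lpath FE (fp x) x"
  unfolding lpath_def
proof (intro conjI allI impI)
  show "length (fp x) = Suc (length x)" by (rule fp_len)
next
  fix k assume k: "k < length x"
  have xne: "x \<noteq> []" using x nilX by auto
  show "(fp x ! k, x ! k, fp x ! Suc k) \<in> FE"
  proof (cases "k = 0")
    case k0: True
    show ?thesis
    proof (cases "length x = 1")
      case True
      then have "[x ! 0] = x" by (cases x) auto
      then have "[x ! 0] \<in> X" using x by simp
      moreover have "fp x ! 0 = ([], [])" "fp x ! Suc 0 = ([], [])" using fp_nth[of 0 x] fp_nth[of "Suc 0" x] True by auto
      ultimately show ?thesis using k0 FE4 by simp
    next
      case False
      then have l: "length x > 1" using xne by (cases x) auto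
      have xs: "x ! 0 # drop 1 x = x" using xne by (cases x) auto
      have "drop 1 x \<noteq> []" using l by simp
      moreover have "x ! 0 # drop 1 x \<in> X" using xs x by simp
      ultimately have "(([], []), x ! 0, [x ! 0], drop 1 x) \<in> FE"
        by (rule FE2[rotated])
      moreover have "take 1 x = [x ! 0]" using xne by (cases x) auto
      ultimately show ?thesis using k0 l fp_nth[of 0 x] fp_nth[of 1 x] by simp
    qed
  next
    case kn0: False
    have d: "drop k x = x ! k # drop (Suc k) x" using k by (simp add: Cons_nth_drop_Suc)
    have t: "take (Suc k) x = take k x @ [x ! k]" using k by (simp add: take_Suc_conv_app_nth)
    have tne: "take k x \<noteq> []" using kn0 xne by simp
    show ?thesis
    proof (cases "Suc k = length x")
      case True
      then have "drop (Suc k) x = []" by simp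
      then have d1: "drop k x = [x ! k]" using d by simp
      have "take k x @ [x ! k] = take (Suc k) x" using t by simp
      also have "\<dots> = x" using True by simp
      finally have "take k x @ [x ! k] \<in> X" using x by simp
      then have "((take k x, [x ! k]), x ! k, [], []) \<in> FE"
        by (rule FE3[OF _ tne])
      then show ?thesis using True kn0 k fp_nth[of k x] fp_nth[of "Suc k" x] d1 by simp
    next
      case False
      then have dne: "drop (Suc k) x \<noteq> []" using k by simp
      have "take k x @ x ! k # drop (Suc k) x = x" using d append_take_drop_id[of k x] by simp
      then have "take k x @ x ! k # drop (Suc k) x \<in> X" using x by simp
      then have "((take k x, x ! k # drop (Suc k) x), x ! k, take k x @ [x ! k], drop (Suc k) x) \<in> FE"
        by (rule FE1[OF _ tne dne])
      then show ?thesis using False kn0 k fp_nth[of k x] fp_nth[of "Suc k" x] d t by simp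
    qed
  qed
qed

lemma fp_hd_last: "hd (fp x) = ([], [])" "last (fp x) = ([], [])"
  unfolding fp_def by (simp_all del: upt_Suc add: hd_map last_map)

lemma fp_rho:
  assumes x: "x \<in> X"
  shows "map rho (fp x) = fpath x"
proof (rule nth_equalityI)
  show "length (map rho (fp x)) = length (fpath x)" using fp_len fpath_facts(1)[OF x] by simp
next
  fix j assume "j < length (map rho (fp x))"
  then have j: "j \<le> length x" using fp_len by (simp add: less_Suc_eq_le)
  have xne: "x \<noteq> []" using x nilX by auto
  show "map rho (fp x) ! j = fpath x ! j"
  proof (cases "j = 0 \<or> j = length x")
    case True
    then show ?thesis using j fp_nth[OF j] fp_len fpath_facts(2,3)[OF x]
      by (auto simp: rho_def)
  next
    case False
    then have "take j x \<noteq> []" using xne by simp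
    then show ?thesis using j False fp_nth[OF j] fp_len by (simp add: rho_def min_def)
  qed
qed

lemma lift:
  "qs \<in> paths E i w i \<Longrightarrow> \<exists>ps. lpath FE ps w \<and> hd ps = ([], []) \<and> last ps = ([], []) \<and> map rho ps = qs"
proof (induction "length w" arbitrary: w qs rule: less_induct)
  case less
  show ?case
  proof (cases "w = []")
    case True
    then have "qs = [i]" using less.prems by (simp add: paths_nil)
    moreover have "lpath FE [([], [])] []" unfolding lpath_def by simp
    ultimately show ?thesis using True by (intro exI[of _ "[([], [])]"]) (simp add: rho_def)
  next
    case False
    from split_first[OF less.prems False] obtain k where k: "1 \<le> k" "k \<le> length w"
      "take (Suc k) qs \<in> frps (take k w)" "drop k qs \<in> paths E i (drop k w) i" by blast
    let ?x = "take k w"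
    have xne: "?x \<noteq> []" using k False by auto
    have xX: "?x \<in> X" using frps_X[OF k(3) xne] .
    have a: "take (Suc k) qs = fpath ?x" using fpath_unique[OF xX k(3)] .
    have lt: "length (drop k w) < length w" using k False by simp
    from less.hyps[OF lt k(4)] obtain pb where pb: "lpath FE pb (drop k w)" "hd pb = ([], [])"
      "last pb = ([], [])" "map rho pb = drop k qs" by blast
    have pbne: "pb \<noteq> []" using pb(1) unfolding lpath_def by auto
    have fpne: "fp ?x \<noteq> []" using fp_len[of ?x] by auto
    have "lpath FE (fp ?x @ tl pb) (?x @ drop k w)"
      by (rule lpath_concat[OF fp_lpath[OF xX] pb(1)]) (simp add: fp_hd_last pb)
    moreover have "hd (fp ?x @ tl pb) = ([], [])" using fpne fp_hd_last by simp
    moreover have "last (fp ?x @ tl pb) = ([], [])"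
      using last_concat_tl[OF fpne pbne] fp_hd_last pb by simp
    moreover have "map rho (fp ?x @ tl pb) = qs"
    proof -
      have "map rho (fp ?x @ tl pb) = fpath ?x @ tl (map rho pb)" using fp_rho[OF xX] by (simp add: map_tl)
      also have "\<dots> = take (Suc k) qs @ tl (drop k qs)" using a pb(4) by simp
      also have "\<dots> = qs" by (metis append_take_drop_id drop_Suc tl_drop)
      finally show ?thesis .
    qed
    ultimately show ?thesis by (intro exI[of _ "fp ?x @ tl pb"]) simp
  qed
qed

end


context setting begin

lemma path_of: "has_path F p w q \<Longrightarrow> \<exists>qs. qs \<in> paths F p w q"
  unfolding has_path_def by auto

lemma lift_mid:
  assumes q: "q \<in> Q" "q' \<in> Q" and qw: "qsw \<in> paths E q w q'"
  shows "\<exists>p\<in>FS. \<exists>p'\<in>FS. has_path FE p w p' \<and> rho p = q \<and> rho p' = q'"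
proof -
  obtain u v where h1: "has_path E i u q" "has_path E q v i" using tr q(1) unfolding trim_def by blast
  from path_of[OF h1(1)] obtain qs1 where qs1: "qs1 \<in> paths E i u q" by blast
  obtain u' v' where h2: "has_path E i u' q'" "has_path E q' v' i" using tr q(2) unfolding trim_def by blast
  from path_of[OF h2(2)] obtain qs2 where qs2: "qs2 \<in> paths E q' v' i" by blast
  note f1 = paths_facts[OF qs1] and f2 = paths_facts[OF qs2] and fw = paths_facts[OF qw]
  define R where "R = qs1 @ tl qsw"
  have lR: "lpath E R (u @ w)" unfolding R_def by (rule lpath_concat[OF f1(1) fw(1)]) (simp add: f1 fw)
  have RR: "R \<noteq> []" "hd R = i" "last R = q'" "length R = Suc (length u + length w)"
    using f1 fw last_concat_tl[OF f1(7) fw(7)] unfolding R_def by auto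
  define F where "F = R @ tl qs2"
  have lF: "lpath E F ((u @ w) @ v')" unfolding F_def by (rule lpath_concat[OF lR f2(1)]) (simp add: RR f2)
  have FF: "hd F = i" "last F = i" using RR f2 last_concat_tl[OF RR(1) f2(7)] unfolding F_def by auto
  have Fp: "F \<in> paths E i ((u @ w) @ v') i" unfolding paths_def using lF FF by simp
  from lift[OF Fp] obtain ps where ps: "lpath FE ps ((u @ w) @ v')" "hd ps = ([], [])"
    "map rho ps = F" by blast
  have lps: "length ps = Suc (length u + length w + length v')" using ps(1) unfolding lpath_def by simp
  have setps: "set ps \<subseteq> FS" using lpath_states[OF ps(1) FE_sub] ps(2)
    unfolding flower_states_def by auto
  define p where "p = ps ! length u"
  define p' where "p' = ps ! (length u + length w)"
  have pFS: "p \<in> FS" "p' \<in> FS" using setps lps unfolding p_def p'_def by auto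
  have "lpath FE (take (Suc (length w)) (drop (length u) ps)) (take (length w) (drop (length u) ((u @ w) @ v')))"
    by (rule lpath_sub[OF ps(1)]) simp
  then have lsub: "lpath FE (take (Suc (length w)) (drop (length u) ps)) w" by simp
  have "hd (take (Suc (length w)) (drop (length u) ps)) = p"
    using lps unfolding p_def by (simp add: hd_drop_conv_nth)
  moreover have "last (take (Suc (length w)) (drop (length u) ps)) = p'"
    using lps unfolding p'_def by (simp add: last_conv_nth min_def)
  ultimately have hp: "has_path FE p w p'" unfolding has_path_def paths_def using lsub by blast
  have "rho p = map rho ps ! length u" using lps unfolding p_def by simp
  also have "\<dots> = F ! length u" using ps(3) by simp
  also have "\<dots> = R ! length u" unfolding F_def using RR by (simp add: nth_append)
  also have "\<dots> = qs1 ! length u" unfolding R_def using f1 by (simp add: nth_append)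
  also have "\<dots> = q" using f1 by simp
  finally have rp: "rho p = q" .
  have "rho p' = map rho ps ! (length u + length w)" using lps unfolding p'_def by simp
  also have "\<dots> = F ! (length u + length w)" using ps(3) by simp
  also have "\<dots> = R ! (length u + length w)" unfolding F_def using RR by (simp add: nth_append)
  also have "\<dots> = last R" using RR by (simp add: last_conv_nth)
  also have "\<dots> = q'" using RR by simp
  finally have rp': "rho p' = q'" .
  show ?thesis using pFS hp rp rp' by blast
qed

lemma fib: "{p \<in> FS. rho p = i} = {([], [])}"
proof -
  have "([], []) \<in> FS" unfolding flower_states_def by simp
  moreover have "rho ([], []) = i" by (simp add: rho_def)
  ultimately show ?thesis using rho_i by blast
qed

lemma surjQ: "rho ` FS = Q"
proof
  show "rho ` FS \<subseteq> Q" using rho_Q by auto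
next
  show "Q \<subseteq> rho ` FS"
  proof
    fix q assume q: "q \<in> Q"
    have "[q] \<in> paths E q [] q" by (simp add: paths_nil)
    from lift_mid[OF q q this] show "q \<in> rho ` FS" by blast
  qed
qed

lemma red_iff:
  assumes q: "q \<in> Q" "q' \<in> Q"
  shows "has_path E q w q' = (\<exists>p\<in>FS. \<exists>p'\<in>FS. has_path FE p w p' \<and> rho p = q \<and> rho p' = q')"
proof
  assume "has_path E q w q'"
  from path_of[OF this] obtain qs where "qs \<in> paths E q w q'" by blast
  then show "\<exists>p\<in>FS. \<exists>p'\<in>FS. has_path FE p w p' \<and> rho p = q \<and> rho p' = q'"
    using lift_mid[OF q] by blast
next
  assume "\<exists>p\<in>FS. \<exists>p'\<in>FS. has_path FE p w p' \<and> rho p = q \<and> rho p' = q'"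
  then obtain p p' where pp0: "has_path FE p w p'" "rho p = q" "rho p' = q'" by blast
  from path_of[OF pp0(1)] obtain ps where "ps \<in> paths FE p w p'" by blast
  with pp0 have pp: "ps \<in> paths FE p w p'" "rho p = q" "rho p' = q'" by auto
  then have l: "lpath FE ps w" "hd ps = p" "last ps = p'" unfolding paths_def by auto
  then have ne: "ps \<noteq> []" unfolding lpath_def by auto
  have "lpath E (map rho ps) w" by (rule lpath_map[OF l(1) rho_edge])
  moreover have "hd (map rho ps) = q" "last (map rho ps) = q'"
    using l ne pp by (simp_all add: hd_map last_map)
  ultimately show "has_path E q w q'" unfolding has_path_def paths_def by blast
qed

theorem sharp: "sharp_reduction rho FS FE ([], []) ([], []) Q E i i"
proof -
  have r0: "rho ([], []) = i" by (simp add: rho_def)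
  show ?thesis unfolding sharp_reduction_def reduction_def
    using fib surjQ red_iff r0 by blast
qed

end

theorem mainTheorem3:
  fixes X :: "'a list set"
    and Q :: "'q set" and E :: "('q \<times> 'a \<times> 'q) set" and i :: 'q
  assumes "finite X"
    and "[] \<notin> X"
    and "minimal_generating_set X"
    and "automaton Q E i i"
    and "trim Q E i i"
    and "recognizes_star_mult Q E i i X"
  shows "\<exists>\<rho> :: ('a list \<times> 'a list) \<Rightarrow> 'q.
           sharp_reduction \<rho> (flower_states X) (flower_edges X) ([], []) ([], [])
                           Q E i i"
proof -
  have "finite Q" "i \<in> Q" "E \<subseteq> Q \<times> UNIV \<times> Q" using assms(4) unfolding automaton_def by auto
  moreover have "\<And>w. card (paths E i w i) = card (factorizations X w)"
    using assms(6) unfolding recognizes_star_mult_def behaviour_def by auto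
  ultimately interpret setting X Q E i using assms(1,2,5) by unfold_locales auto
  show ?thesis using sharp by blast
qed

end
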